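(* For every block $i\in\{1,\dots,N\}$, the function $\hat u_i^*(\epsilon)=\sum_{\gamma_G,\gamma_H\in\{H_1,\dots,H_K\}}u_i^*(\langle\epsilon,\gamma_G,\gamma_H\rangle)$ is non-increasing in the battery energy state $\epsilon$.
   Context: Finite-horizon MDP with $N$ blocks of length $\tau>0$. Parameters: $B_m>0$, positive integers $M,K$; channel levels $0<H_1<\dots<H_K$; $R,W,\sigma^2,g_0,\theta,d_G,d_H>0$; $p_G^{\max},p_H^{\max}>0$; weights $w_G,w_D>0$; $E_{H}$ a random variable with density $f_{E_H}$ on $[0,E_m]$. A state is $s=\langle\epsilon,\gamma_G,\gamma_H\rangle$ with $\epsilon\in\{(2m-1)B_m/(2M): m=1,\dots,M\}$ and $\gamma_G,\gamma_H\in\{H_1,\dots,H_K\}$. Let $p^{inv}_j(s)=(2^{R/(W\tau)}-1)\sigma^2(g_0 d_j^{-\theta}\gamma_j)^{-1}$ for $j\in\{G,H\}$, $\kappa=\min\{p_G^{\max},w_D(w_G\tau)^{-1}\}$, and $c(s)=w_D$ if $p^{inv}_G(s)>\kappa$, $c(s)=w_G p^{inv}_G(s)\tau$ otherwise. The allowable actions are $\mathcal{A}_s=\{0\}$ if $p^{inv}_H(s)>\min\{\epsilon/\tau,p_H^{\max}\}$ and $\mathcal{A}_s=\{0,1\}$ otherwise; the cost is $c(s,\alpha)=(1-\alpha)c(s)$. Transitions: given $s$ and $\alpha$, the next channel states $\gamma_G',\gamma_H'$ are independent, each uniform on $\{H_1,\dots,H_K\}$, independent of the next energy state $\epsilon'=Q(\epsilon-\alpha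 p^{inv}_H(s)\tau+E_H)$, where $Q(\varepsilon)=\big(2\min\{\lfloor M\min\{\varepsilon,B_m\}/B_m\rfloor+1,M\}-1\big)B_m/(2M)$; denote the resulting transition probability $p(s'|s,\alpha)$. Optimal cost-to-go functions: $u_N^*(s)=\min_{\alpha\in\mathcal{A}_s}c(s,\alpha)$ and, for $i<N$, $u_i^*(s)=\min_{\alpha\in\mathcal{A}_s}\{c(s,\alpha)+\sum_{s'}p(s'|s,\alpha)u_{i+1}^*(s')\}$. *)

theory Defs
  imports "HOL-Analysis.Analysis"
begin

text \<open>System parameters of the finite-horizon MDP.  Channel levels are
  H 1 < ... < H K; the energy-harvesting random variable E_H has density fE
  (supported on [0, Em]).\<close>

record params =
  Bm :: real
  Mq :: nat
  Kc :: nat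
  Hl :: "nat \<Rightarrow> real"
  Rr :: real
  Ww :: real
  sigma2 :: real
  g0 :: real
  theta :: real
  dG :: real
  dH :: real
  pGmax :: real
  pHmax :: real
  wG :: real
  wD :: real
  tau :: real
  Em :: real
  fE :: "real \<Rightarrow> real"

type_synonym state = "real \<times> real \<times> real"  \<comment> \<open>(epsilon, gamma_G, gamma_H)\<close>

definition energy_levels :: "params \<Rightarrow> real set" where
  "energy_levels P = (\<lambda>m. (2 * real m - 1) * Bm P / (2 * real (Mq P))) ` {1..Mq P}"

definition channel_levels :: "params \<Rightarrow> real set" where
  "channel_levels P = Hl P ` {1..Kc P}"

definition states :: "params \<Rightarrow> state set" where
  "states P = energy_levels P \<times> channel_levels P \<times> channel_levels P"

definition pinv :: "params \<Rightarrow> real \<Rightarrow> real \<Rightarrow> real" where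
  "pinv P d \<gamma> = (2 powr (Rr P / (Ww P * tau P)) - 1) * sigma2 P / (g0 P * d powr (- theta P) * \<gamma>)"

definition pinvG :: "params \<Rightarrow> state \<Rightarrow> real" where
  "pinvG P s = pinv P (dG P) (fst (snd s))"

definition pinvH :: "params \<Rightarrow> state \<Rightarrow> real" where
  "pinvH P s = pinv P (dH P) (snd (snd s))"

definition kappa :: "params \<Rightarrow> real" where
  "kappa P = min (pGmax P) (wD P / (wG P * tau P))"

definition cost0 :: "params \<Rightarrow> state \<Rightarrow> real" where
  "cost0 P s = (if pinvG P s > kappa P then wD P else wG P * pinvG P s * tau P)"

definition actions :: "params \<Rightarrow> state \<Rightarrow> real set" where
  "actions P s = (if pinvH P s > min (fst s / tau P) (pHmax P) then {0} else {0, 1})"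

definition cost :: "params \<Rightarrow> state \<Rightarrow> real \<Rightarrow> real" where
  "cost P s \<alpha> = (1 - \<alpha>) * cost0 P s"

definition quant :: "params \<Rightarrow> real \<Rightarrow> real" where
  "quant P x = (2 * real_of_int (min (\<lfloor>real (Mq P) * min x (Bm P) / Bm P\<rfloor> + 1) (int (Mq P))) - 1)
                 * Bm P / (2 * real (Mq P))"

definition EH_dist :: "params \<Rightarrow> real measure" where
  "EH_dist P = density lborel (\<lambda>y. ennreal (fE P y))"

definition trans :: "params \<Rightarrow> state \<Rightarrow> real \<Rightarrow> state \<Rightarrow> real" where
  "trans P s \<alpha> s' =
     (if fst (snd s') \<in> channel_levels P \<and> snd (snd s') \<in> channel_levels P
      then 1 / real (Kc P) ^ 2 else 0)
     * measure (EH_dist P) {y. quant P (fst s - \<alpha> * pinvH P s * tau P + y) = fst s'}"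

text \<open>Cost-to-go with k remaining steps after the current one:
  u_i^* = Vk P (N - i).\<close>
fun Vk :: "params \<Rightarrow> nat \<Rightarrow> state \<Rightarrow> real" where
  "Vk P 0 s = Min ((\<lambda>\<alpha>. cost P s \<alpha>) ` actions P s)"
| "Vk P (Suc k) s = Min ((\<lambda>\<alpha>. cost P s \<alpha> + (\<Sum>s'\<in>states P. trans P s \<alpha> s' * Vk P k s')) ` actions P s)"

definition ustar :: "params \<Rightarrow> nat \<Rightarrow> nat \<Rightarrow> state \<Rightarrow> real" where
  "ustar P N i s = Vk P (N - i) s"

definition uhat :: "params \<Rightarrow> nat \<Rightarrow> nat \<Rightarrow> real \<Rightarrow> real" where
  "uhat P N i \<epsilon> = (\<Sum>gG\<in>channel_levels P. \<Sum>gH\<in>channel_levels P. ustar P N i (\<epsilon>, gG, gH))"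

end

theory Submission
  imports Defs
begin

lemma key:
  fixes \<mu> :: "real measure" and q f :: "real \<Rightarrow> real"
  assumes fm: "finite_measure \<mu>" and sb: "sets \<mu> = sets borel"
    and ae: "AE y in \<mu>. 0 \<le> y" and L: "finite L"
    and qm: "q \<in> borel_measurable borel" and qmono: "mono q"
    and qL: "\<And>z. 0 \<le> z \<Longrightarrow> q z \<in> L"
    and fa: "\<And>a b. a \<in> L \<Longrightarrow> b \<in> L \<Longrightarrow> a \<le> b \<Longrightarrow> f b \<le> f a"
    and x1: "0 \<le> x1" and x12: "x1 \<le> x2"
  shows "(\<Sum>e\<in>L. measure \<mu> {y. q (x2 + y) = e} * f e) \<le> (\<Sum>e\<in>L. measure \<mu> {y. q (x1 + y) = e} * f e)"
proof -
  interpret finite_measure \<mu> by (rule fm)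
  have ms: "{y. q (x + y) = e} \<in> sets \<mu>" for x e
  proof -
    have "(\<lambda>y. q (x + y)) \<in> borel_measurable borel" using qm by measurable
    then have "{y \<in> space borel. q (x + y) = e} \<in> sets borel" by measurable
    then show ?thesis using sb by simp
  qed
  define G where "G x y = (\<Sum>e\<in>L. f e * indicator {y. q (x + y) = e} y)" for x y :: real
  have int: "integrable \<mu> (G x)" for x
    unfolding G_def
    apply (rule Bochner_Integration.integrable_sum)
    apply (rule integrable_mult_right)
    apply (rule integrable_real_indicator[OF ms])
    using emeasure_finite by (auto simp: less_top[symmetric])
  have ival: "integral\<^sup>L \<mu> (G x) = (\<Sum>e\<in>L. measure \<mu> {y. q (x + y) = e} * f e)" for x
    unfolding G_def
    apply (subst Bochner_Integration.integral_sum)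
     apply (rule integrable_mult_right, rule integrable_real_indicator[OF ms], simp add: less_top[symmetric])
    apply (rule sum.cong, simp)
    using ms[of x] sets.sets_into_space
    by (simp add: Int_absorb2 mult.commute)
  have Gv: "G x y = f (q (x + y))" if "0 \<le> x + y" for x y
  proof -
    have "G x y = (\<Sum>e\<in>L. if e = q (x + y) then f e else 0)"
      unfolding G_def by (rule sum.cong) (auto simp: indicator_def)
    also have "\<dots> = f (q (x + y))" using qL[OF that] L by simp
    finally show ?thesis .
  qed
  have "integral\<^sup>L \<mu> (G x2) \<le> integral\<^sup>L \<mu> (G x1)"
  proof (rule integral_mono_AE[OF int int])
    show "AE y in \<mu>. G x2 y \<le> G x1 y"
      using ae
    proof eventually_elim
      case (elim y)
      then have "0 \<le> x1 + y" "0 \<le> x2 + y" using x1 x12 by auto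
      then show ?case using Gv fa qL qmono x12 by (simp add: monoD)
    qed
  qed
  then show ?thesis using ival by simp
qed

lemma min_mono_lemma:
  fixes F1 F2 :: "real \<Rightarrow> real"
  assumes "finite A2" "A1 \<subseteq> A2" "A1 \<noteq> {}" "\<And>a. a \<in> A1 \<Longrightarrow> F2 a \<le> F1 a"
  shows "Min (F2 ` A2) \<le> Min (F1 ` A1)"
proof -
  have fA1: "finite A1" using assms(1,2) finite_subset by blast
  have "Min (F1 ` A1) \<in> F1 ` A1" using fA1 assms(3) by (intro Min_in) auto
  then obtain a where a: "a \<in> A1" "Min (F1 ` A1) = F1 a" by auto
  have "Min (F2 ` A2) \<le> F2 a" using a assms(1,2) by (intro Min_le) auto
  also have "\<dots> \<le> F1 a" using assms(4) a by blast
  finally show ?thesis using a by simp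
qed

lemma quant_mono:
  assumes "Bm P > 0" "Mq P > 0"
  shows "mono (quant P)"
proof (rule monoI)
  fix x y :: real assume xy: "x \<le> y"
  have "real (Mq P) * min x (Bm P) / Bm P \<le> real (Mq P) * min y (Bm P) / Bm P"
    using assms xy by (intro divide_right_mono mult_left_mono) auto
  then have "\<lfloor>real (Mq P) * min x (Bm P) / Bm P\<rfloor> \<le> \<lfloor>real (Mq P) * min y (Bm P) / Bm P\<rfloor>"
    by (rule floor_mono)
  then have "min (\<lfloor>real (Mq P) * min x (Bm P) / Bm P\<rfloor> + 1) (int (Mq P))
     \<le> min (\<lfloor>real (Mq P) * min y (Bm P) / Bm P\<rfloor> + 1) (int (Mq P))" by linarith
  then have "real_of_int (min (\<lfloor>real (Mq P) * min x (Bm P) / Bm P\<rfloor> + 1) (int (Mq P)))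
     \<le> real_of_int (min (\<lfloor>real (Mq P) * min y (Bm P) / Bm P\<rfloor> + 1) (int (Mq P)))"
    by linarith
  then show "quant P x \<le> quant P y"
    unfolding quant_def using assms
    by (intro divide_right_mono mult_right_mono) auto
qed

lemma quant_in:
  assumes "Bm P > 0" "Mq P > 0" "0 \<le> z"
  shows "quant P z \<in> energy_levels P"
proof -
  define j where "j = min (\<lfloor>real (Mq P) * min z (Bm P) / Bm P\<rfloor> + 1) (int (Mq P))"
  have "0 \<le> real (Mq P) * min z (Bm P) / Bm P" using assms by auto
  then have "0 \<le> \<lfloor>real (Mq P) * min z (Bm P) / Bm P\<rfloor>" by simp
  then have j1: "1 \<le> j" using assms unfolding j_def by auto
  have j2: "j \<le> int (Mq P)" unfolding j_def by simp
  have "quant P z = (2 * real (nat j) - 1) * Bm P / (2 * real (Mq P))"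
    unfolding quant_def j_def[symmetric] using j1 by simp
  moreover have "nat j \<in> {1..Mq P}" using j1 j2 by auto
  ultimately show ?thesis unfolding energy_levels_def by blast
qed

lemma quant_meas: "quant P \<in> borel_measurable borel"
  unfolding quant_def by measurable

lemma levels_pos:
  assumes "Bm P > 0" "Mq P > 0" "e \<in> energy_levels P"
  shows "0 < e"
  using assms unfolding energy_levels_def by (auto intro!: divide_pos_pos mult_pos_pos)

lemma act_sub:
  assumes "tau P > 0" "e1 \<le> e2"
  shows "actions P (e1, g, h) \<subseteq> actions P (e2, g, h)"
proof -
  have "e1 / tau P \<le> e2 / tau P" using assms by (simp add: divide_right_mono)
  then show ?thesis unfolding actions_def pinvH_def by auto
qed

lemma act_nonneg:
  assumes "tau P > 0" "0 < e1" "\<alpha> \<in> actions P (e1, g, h)"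
  shows "0 \<le> e1 - \<alpha> * pinv P (dH P) h * tau P"
proof (cases "\<alpha> = 0")
  case True then show ?thesis using assms by simp
next
  case False
  then have "\<alpha> = 1" "\<not> pinv P (dH P) h > min (e1 / tau P) (pHmax P)"
    using assms(3) unfolding actions_def pinvH_def by (auto split: if_splits)
  then have "pinv P (dH P) h \<le> e1 / tau P" by auto
  then have "pinv P (dH P) h * tau P \<le> e1" using assms(1) by (simp add: pos_le_divide_eq)
  then show ?thesis using \<open>\<alpha> = 1\<close> by simp
qed

lemma finite_levels: "finite (energy_levels P)"
  unfolding energy_levels_def by simp

lemma finite_channels: "finite (channel_levels P)"
  unfolding channel_levels_def by simp

lemma finite_states: "finite (states P)"
  unfolding states_def using finite_levels finite_channels by auto

lemma finite_actions: "finite (actions P s)" "actions P s \<noteq> {}" "0 \<in> actions P s"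
  unfolding actions_def by auto

theorem lemma3:
  fixes P :: params and N :: nat
  assumes "Bm P > 0" and "Mq P > 0" and "Kc P > 0"
    and "0 < Hl P 1" and "\<And>k. 1 \<le> k \<Longrightarrow> k < Kc P \<Longrightarrow> Hl P k < Hl P (Suc k)"
    and "Rr P > 0" and "Ww P > 0" and "sigma2 P > 0" and "g0 P > 0" and "theta P > 0"
    and "dG P > 0" and "dH P > 0" and "pGmax P > 0" and "pHmax P > 0"
    and "wG P > 0" and "wD P > 0" and "tau P > 0" and "Em P > 0"
    and "fE P \<in> borel_measurable borel"
    and "\<And>y. 0 \<le> fE P y"
    and "\<And>y. y \<notin> {0..Em P} \<Longrightarrow> fE P y = 0"
    and "(\<integral>\<^sup>+ y. ennreal (fE P y) \<partial>lborel) = 1"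
  shows "\<forall>i\<in>{1..N}. \<forall>\<epsilon>1\<in>energy_levels P. \<forall>\<epsilon>2\<in>energy_levels P.
           \<epsilon>1 \<le> \<epsilon>2 \<longrightarrow> uhat P N i \<epsilon>2 \<le> uhat P N i \<epsilon>1"
  
proof -
  let ?L = "energy_levels P"
  let ?C = "channel_levels P"
  let ?\<mu> = "EH_dist P"
  have fmeas: "(\<lambda>y. ennreal (fE P y)) \<in> borel_measurable lborel"
    using assms(19) by measurable
  have fm: "finite_measure ?\<mu>"
    apply (rule finite_measureI)
    unfolding EH_dist_def
    apply (subst emeasure_density[OF fmeas])
    using assms(22) by auto
  have sb: "sets ?\<mu> = sets borel" unfolding EH_dist_def by simp
  have ae: "AE y in ?\<mu>. 0 \<le> y"
    unfolding EH_dist_def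
    apply (subst AE_density[OF fmeas])
    apply (rule AE_I2)
    subgoal for x using assms(21)[of x] by (cases "0 \<le> x") auto
    done
  have W: "(\<Sum>s'\<in>states P. trans P (e2, g, h) \<alpha> s' * V s') \<le> (\<Sum>s'\<in>states P. trans P (e1, g, h) \<alpha> s' * V s')"
    if V: "\<And>a b g' h'. a \<in> ?L \<Longrightarrow> b \<in> ?L \<Longrightarrow> a \<le> b \<Longrightarrow> V (b, g', h') \<le> V (a, g', h')"
      and x1: "0 \<le> e1 - \<alpha> * pinv P (dH P) h * tau P" and e12: "e1 \<le> e2"
    for V e1 e2 g h \<alpha>
  proof -
    define c :: "real \<times> real \<Rightarrow> real" where
      "c p = (if fst p \<in> ?C \<and> snd p \<in> ?C then 1 / real (Kc P) ^ 2 else 0)" for p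
    have c0: "0 \<le> c p" for p unfolding c_def by auto
    have S: "(\<Sum>s'\<in>states P. trans P (e, g, h) \<alpha> s' * V s') =
      (\<Sum>p\<in>?C \<times> ?C. c p * (\<Sum>e'\<in>?L. measure ?\<mu> {y. quant P (e - \<alpha> * pinv P (dH P) h * tau P + y) = e'} * V (e', fst p, snd p)))"
      for e
    proof -
      have "(\<Sum>s'\<in>states P. trans P (e, g, h) \<alpha> s' * V s') =
        (\<Sum>e'\<in>?L. \<Sum>p\<in>?C \<times> ?C. trans P (e, g, h) \<alpha> (e', p) * V (e', p))"
        unfolding states_def by (subst sum.cartesian_product) (simp add: split_def)
      also have "\<dots> = (\<Sum>p\<in>?C \<times> ?C. \<Sum>e'\<in>?L. trans P (e, g, h) \<alpha> (e', p) * V (e', p))"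
        by (rule sum.swap)
      also have "\<dots> = (\<Sum>p\<in>?C \<times> ?C. c p * (\<Sum>e'\<in>?L. measure ?\<mu> {y. quant P (e - \<alpha> * pinv P (dH P) h * tau P + y) = e'} * V (e', fst p, snd p)))"
        by (rule sum.cong[OF refl]) (auto simp: trans_def c_def pinvH_def sum_distrib_left mult_ac)
      finally show ?thesis .
    qed
    show ?thesis
      unfolding S
    proof (rule sum_mono)
      fix p assume p: "p \<in> ?C \<times> ?C"
      show "c p * (\<Sum>e'\<in>?L. measure ?\<mu> {y. quant P (e2 - \<alpha> * pinv P (dH P) h * tau P + y) = e'} * V (e', fst p, snd p))
         \<le> c p * (\<Sum>e'\<in>?L. measure ?\<mu> {y. quant P (e1 - \<alpha> * pinv P (dH P) h * tau P + y) = e'} * V (e', fst p, snd p))"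
        apply (rule mult_left_mono[OF _ c0])
        apply (rule key[OF fm sb ae finite_levels quant_meas quant_mono[OF assms(1,2)]])
        using quant_in[OF assms(1,2)] V[of _ _ "fst p" "snd p"] x1 e12 by auto
    qed
  qed
  have mono: "\<forall>g h e1 e2. e1 \<in> ?L \<longrightarrow> e2 \<in> ?L \<longrightarrow> e1 \<le> e2 \<longrightarrow> Vk P k (e2, g, h) \<le> Vk P k (e1, g, h)" for k
  proof (induction k)
    case 0
    show ?case
    proof (intro allI impI)
      fix g h e1 e2 assume e: "e1 \<in> ?L" "e2 \<in> ?L" "e1 \<le> e2"
      show "Vk P 0 (e2, g, h) \<le> Vk P 0 (e1, g, h)"
        unfolding Vk.simps
        apply (rule min_mono_lemma)
        using act_sub[OF assms(17) e(3)] finite_actions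
        by (auto simp: cost_def cost0_def pinvG_def)
    qed
  next
    case (Suc k)
    show ?case
    proof (intro allI impI)
      fix g h e1 e2 assume e: "e1 \<in> ?L" "e2 \<in> ?L" "e1 \<le> e2"
      show "Vk P (Suc k) (e2, g, h) \<le> Vk P (Suc k) (e1, g, h)"
        unfolding Vk.simps
      proof (rule min_mono_lemma)
        show "finite (actions P (e2, g, h))" "actions P (e1, g, h) \<noteq> {}"
          using finite_actions by auto
        show "actions P (e1, g, h) \<subseteq> actions P (e2, g, h)"
          using act_sub[OF assms(17) e(3)] .
        fix \<alpha> assume a: "\<alpha> \<in> actions P (e1, g, h)"
        have x1: "0 \<le> e1 - \<alpha> * pinv P (dH P) h * tau P"
          using act_nonneg[OF assms(17) levels_pos[OF assms(1,2) e(1)] a] .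
        have "(\<Sum>s'\<in>states P. trans P (e2, g, h) \<alpha> s' * Vk P k s') \<le> (\<Sum>s'\<in>states P. trans P (e1, g, h) \<alpha> s' * Vk P k s')"
          by (rule W[OF _ x1 e(3)]) (use Suc.IH in blast)
        moreover have "cost P (e2, g, h) \<alpha> = cost P (e1, g, h) \<alpha>"
          by (simp add: cost_def cost0_def pinvG_def)
        ultimately show "cost P (e2, g, h) \<alpha> + (\<Sum>s'\<in>states P. trans P (e2, g, h) \<alpha> s' * Vk P k s')
          \<le> cost P (e1, g, h) \<alpha> + (\<Sum>s'\<in>states P. trans P (e1, g, h) \<alpha> s' * Vk P k s')" by simp
      qed
    qed
  qed
  show ?thesis
    unfolding uhat_def ustar_def
    using mono by (auto intro!: sum_mono)
qed

end
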